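(* Let $L_{n,j}$, $D_{n,j}$, $U_{n,j}$ denote the total number of levels, descents, and ascents, respectively, over all members of $I_{n,j}$. Then $$\sum_{n\ge1}\sum_{j=1}^nL_{n,j}y^j\frac{x^n}{n!}=xy+\frac{2(xy-y-1)\ln(1-xy)-2y(x-2)\ln(1-x)-y\left(\ln^2(1-xy)-\ln^2(1-x)\right)}{2(1-y)},$$ $$\sum_{n\ge1}\sum_{j=1}^nD_{n,j}y^j\frac{x^n}{n!}=\frac{xy}{2(1-y)}\left(\frac{3x-2}{1-x}-\frac{xy^2}{1-xy}\right)+\frac{(1-xy)\ln(1-xy)-y(2-x-y)\ln(1-x)}{(1-y)^2}+\frac{y\left(\ln^2(1-xy)-\ln^2(1-x)\right)}{2(1-y)},$$ $$\sum_{n\ge1}\sum_{j=1}^nU_{n,j}y^j\frac{x^n}{n!}=\frac{xy}{2(1-y)}\left(\frac{2-x}{1-x}-\frac{xy^2}{1-xy}\right)+\frac{y(1-xy)}{(1-y)^2}\ln\left(\frac{1-x}{1-xy}\right).$$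
   Context: An inversion sequence of length $n$ is a sequence $\rho=\rho_1\cdots\rho_n$ of integers with $1\le \rho_i\le i$ for all $i$; $I_{n,j}$ is the set of those of length $n$ with last letter $j$. A level, descent, or ascent of $\rho$ is an index $i\in[n-1]$ with $\rho_i=\rho_{i+1}$, $\rho_i>\rho_{i+1}$, or $\rho_i<\rho_{i+1}$, respectively. *)

theory Defs
  imports Complex_Main
begin

text \<open>Inversion sequences of length n are lists rho of length n with
  1 \<le> rho!k \<le> k+1 for 0-based positions k (i.e. 1 \<le> rho_i \<le> i, 1-based).\<close>

definition inv_seq :: "nat \<Rightarrow> nat list set" where
  "inv_seq n = {rho. length rho = n \<and> (\<forall>k<n. 1 \<le> rho ! k \<and> rho ! k \<le> k + 1)}"

definition I_set :: "nat \<Rightarrow> nat \<Rightarrow> nat list set" where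
  "I_set n j = {rho \<in> inv_seq n. n \<ge> 1 \<and> last rho = j}"

text \<open>Levels, descents, ascents: 1-based indices i in [n-1] correspond to
  0-based indices i < n - 1 comparing rho!i with rho!(i+1).\<close>
definition levels :: "nat list \<Rightarrow> nat" where
  "levels rho = card {i. i + 1 < length rho \<and> rho ! i = rho ! (i + 1)}"

definition descents :: "nat list \<Rightarrow> nat" where
  "descents rho = card {i. i + 1 < length rho \<and> rho ! i > rho ! (i + 1)}"

definition ascents :: "nat list \<Rightarrow> nat" where
  "ascents rho = card {i. i + 1 < length rho \<and> rho ! i < rho ! (i + 1)}"

definition L_tot :: "nat \<Rightarrow> nat \<Rightarrow> nat" where
  "L_tot n j = (\<Sum>rho\<in>I_set n j. levels rho)"

definition D_tot :: "nat \<Rightarrow> nat \<Rightarrow> nat" where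
  "D_tot n j = (\<Sum>rho\<in>I_set n j. descents rho)"

definition U_tot :: "nat \<Rightarrow> nat \<Rightarrow> nat" where
  "U_tot n j = (\<Sum>rho\<in>I_set n j. ascents rho)"

end

theory Submission
  imports Defs "HOL-Analysis.Analysis"
begin


definition H :: "nat \<Rightarrow> real" where "H n = (\<Sum>i<n. 1 / real (Suc i))"

lemma e2_sums:
  fixes z :: real assumes "\<bar>z\<bar> < 1"
  shows "(\<lambda>n. z ^ (n+1) / real (n+1)) sums (- ln (1 - z))"
proof -
  have "(\<lambda>n. - ((-(-z))^n) / of_nat n) sums ln (1 + (-z))"
    by (rule ln_series') (use assms in simp)
  then have "(\<lambda>n. z^n / real n) sums (- ln (1 - z))"
    using sums_minus by fastforce
  then show ?thesis using sums_Suc_iff[of "\<lambda>n. z^n / real n"] by simp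
qed

lemma e4_sums:
  fixes z :: real assumes "\<bar>z\<bar> < 1"
  shows "(\<lambda>n. z ^ (n+1) / real n) sums (- z * ln (1 - z))"
proof -
  have "(\<lambda>n. - ((-(-z))^n) / of_nat n) sums ln (1 + (-z))"
    by (rule ln_series') (use assms in simp)
  then have "(\<lambda>n. z^n / real n) sums (- ln (1 - z))"
    using sums_minus by fastforce
  from sums_mult[OF this, of z] show ?thesis by (simp add: mult_ac)
qed

lemma e1_sums:
  fixes z :: real assumes "\<bar>z\<bar> < 1"
  shows "(\<lambda>n. z ^ (n+1)) sums (z / (1 - z))"
proof -
  from sums_mult[OF geometric_sums[of z], of z] assms show ?thesis by (simp add: divide_simps)
qed

lemma pf: "(a::real) > 0 \<Longrightarrow> b > 0 \<Longrightarrow> 1 / (a * b) = (1 / a + 1 / b) / (a + b)"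
  by (simp add: divide_simps)

lemma conv_ident:
  "(\<Sum>i\<le>k. 1 / (real (i+1) * real (k - i + 1))) = 2 * H (k+1) / real (k+2)"
proof -
  have "(\<Sum>i\<le>k. 1 / (real (i+1) * real (k - i + 1)))
      = (\<Sum>i\<le>k. (1 / real (i+1) + 1 / real (k - i + 1)) / real (k+2))"
  proof (rule sum.cong)
    fix i assume "i \<in> {..k}"
    then have e: "real (i+1) + real (k - i + 1) = real (k+2)" by (simp add: of_nat_diff)
    have "1 / (real (i+1) * real (k - i + 1)) = (1 / real (i+1) + 1 / real (k - i + 1)) / (real (i+1) + real (k - i + 1))"
      by (rule pf) simp_all
    then show "1 / (real (i+1) * real (k - i + 1)) = (1 / real (i+1) + 1 / real (k - i + 1)) / real (k+2)"
      by (simp only: e)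
  qed simp
  also have "\<dots> = ((\<Sum>i\<le>k. 1 / real (i+1)) + (\<Sum>i\<le>k. 1 / real (k - i + 1))) / real (k+2)"
    by (simp only: sum_divide_distrib[symmetric] sum.distrib)
  also have "(\<Sum>i\<le>k. 1 / real (k - i + 1)) = (\<Sum>i\<le>k. 1 / real (i+1))"
    using sum.atLeastAtMost_rev[of "\<lambda>i. 1 / real (k - i + 1)" 0 k]
    by (simp add: atMost_atLeast0)
  also have "(\<Sum>i\<le>k. 1 / real (i+1)) = H (k+1)"
    unfolding H_def by (simp add: lessThan_Suc_atMost)
  finally show ?thesis by simp
qed

lemma e3_sums:
  fixes z :: real assumes "\<bar>z\<bar> < 1"
  shows "(\<lambda>n. H n * z ^ (n+1) / real (n+1)) sums ((ln (1 - z))^2 / 2)"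
proof -
  define a where "a = (\<lambda>n. z ^ (n+1) / real (n+1))"
  have sa: "a sums (- ln (1 - z))" unfolding a_def by (rule e2_sums[OF assms])
  have "(\<lambda>n. \<bar>z\<bar> ^ (n+1) / real (n+1)) sums (- ln (1 - \<bar>z\<bar>))"
    by (rule e2_sums) (use assms in simp)
  moreover have "(\<lambda>n. norm (a n)) = (\<lambda>n. \<bar>z\<bar> ^ (n+1) / real (n+1))"
    by (auto simp: a_def power_abs abs_mult)
  ultimately have na: "summable (\<lambda>n. norm (a n))" by (metis sums_summable)
  have "(\<lambda>k. \<Sum>i\<le>k. a i * a (k - i)) sums ((\<Sum>k. a k) * (\<Sum>k. a k))"
    by (rule Cauchy_product_sums[OF na na])
  also have "(\<Sum>k. a k) = - ln (1 - z)" using sa by (simp add: sums_iff)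
  finally have c: "(\<lambda>k. \<Sum>i\<le>k. a i * a (k - i)) sums ((ln (1 - z))^2)"
    by (simp add: power2_eq_square)
  have "(\<Sum>i\<le>k. a i * a (k - i)) = 2 * (H (Suc k) * z ^ (Suc k + 1) / real (Suc k + 1))" for k
  proof -
    have "(\<Sum>i\<le>k. a i * a (k - i)) = (\<Sum>i\<le>k. z ^ (k+2) * (1 / (real (i+1) * real (k - i + 1))))"
    proof (rule sum.cong)
      fix i assume "i \<in> {..k}"
      then have "z ^ (i+1) * z ^ (k - i + 1) = z ^ (k+2)"
        by (simp flip: power_add)
      then show "a i * a (k - i) = z ^ (k+2) * (1 / (real (i+1) * real (k - i + 1)))"
        unfolding a_def by (simp add: field_simps)
    qed simp
    also have "\<dots> = z ^ (k+2) * (\<Sum>i\<le>k. 1 / (real (i+1) * real (k - i + 1)))"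
      by (rule sum_distrib_left[symmetric])
    also have "\<dots> = z ^ (k+2) * (2 * H (k+1) / real (k+2))"
      by (simp only: conv_ident)
    finally show ?thesis by simp
  qed
  with c have "(\<lambda>k. 2 * (H (Suc k) * z ^ (Suc k + 1) / real (Suc k + 1))) sums ((ln (1 - z))^2)"
    by simp
  from sums_divide[OF this, of 2]
  have "(\<lambda>k. 2 * (H (Suc k) * z ^ (Suc k + 1) / real (Suc k + 1)) / 2) sums ((ln (1 - z))^2 / 2)"
    by (simp only:)
  then have "(\<lambda>k. H (Suc k) * z ^ (Suc k + 1) / real (Suc k + 1)) sums ((ln (1 - z))^2 / 2)"
    by (simp only: nonzero_mult_div_cancel_left[of "2::real"] zero_neq_numeral[symmetric] not_False_eq_True)
  then show ?thesis using sums_Suc_iff[of "\<lambda>n. H n * z ^ (n+1) / real (n+1)"] by (simp add: H_def)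
qed



definition stat :: "(nat \<Rightarrow> nat \<Rightarrow> bool) \<Rightarrow> nat list \<Rightarrow> nat" where
  "stat R r = card {i. i + 1 < length r \<and> R (r ! i) (r ! (i + 1))}"

lemma levels_stat: "levels r = stat (=) r" by (simp add: levels_def stat_def)
lemma descents_stat: "descents r = stat (\<lambda>a b. b < a) r" by (simp add: descents_def stat_def)
lemma ascents_stat: "ascents r = stat (<) r" by (simp add: ascents_def stat_def)

lemma stat_snoc:
  "stat R (r @ [j]) = stat R r + (if r \<noteq> [] \<and> R (last r) j then 1 else 0)"
proof -
  let ?S = "{i. i + 1 < length r \<and> R (r ! i) (r ! (i + 1))}"
  let ?E = "if r \<noteq> [] \<and> R (last r) j then {length r - 1} else {}"
  have eq: "{i. i + 1 < length (r @ [j]) \<and> R ((r @ [j]) ! i) ((r @ [j]) ! (i + 1))} = ?S \<union> ?E"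
  proof (rule set_eqI)
    fix i
    show "i \<in> {i. i + 1 < length (r @ [j]) \<and> R ((r @ [j]) ! i) ((r @ [j]) ! (i + 1))} \<longleftrightarrow> i \<in> ?S \<union> ?E"
    proof (cases "i + 1 < length r")
      case True
      then show ?thesis by (auto simp: nth_append)
    next
      case False
      show ?thesis
      proof (cases "i + 1 = length r")
        case True
        then have "r \<noteq> []" by auto
        moreover have "r ! i = last r" using True \<open>r \<noteq> []\<close> by (simp add: last_conv_nth) (metis diff_Suc_1 One_nat_def)
        ultimately show ?thesis using True by (auto simp: nth_append)
      qed (use False in auto)
    qed
  qed
  have fin: "finite ?S" by (rule finite_subset[of _ "{..<length r}"]) auto
  have dis: "?S \<inter> ?E = {}" by auto
  show ?thesis unfolding stat_def eq
    by (subst card_Un_disjoint[OF fin _ dis]) auto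
qed

lemma stat_Nil: "stat R [] = 0" by (simp add: stat_def)

lemma inv_seq_0: "inv_seq 0 = {[]}" by (auto simp: inv_seq_def)

lemma inv_seq_Suc: "inv_seq (Suc n) = (\<lambda>(r, j). r @ [j]) ` (inv_seq n \<times> {1..Suc n})"
proof (rule set_eqI)
  fix s
  show "s \<in> inv_seq (Suc n) \<longleftrightarrow> s \<in> (\<lambda>(r, j). r @ [j]) ` (inv_seq n \<times> {1..Suc n})"
  proof
    assume s: "s \<in> inv_seq (Suc n)"
    then have len: "length s = Suc n" by (simp add: inv_seq_def)
    then have sd: "s = butlast s @ [last s]"
      by (metis append_butlast_last_id length_0_conv nat.distinct(1))
    have "butlast s \<in> inv_seq n"
      using s by (auto simp: inv_seq_def nth_butlast)
    moreover have "last s \<in> {1..Suc n}"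
    proof -
      have "last s = s ! n" using len by (metis diff_Suc_1 last_conv_nth list.size(3) nat.distinct(1))
      then show ?thesis using s by (auto simp: inv_seq_def)
    qed
    ultimately show "s \<in> (\<lambda>(r, j). r @ [j]) ` (inv_seq n \<times> {1..Suc n})"
      using sd by (auto intro!: image_eqI[where x="(butlast s, last s)"])
  next
    assume "s \<in> (\<lambda>(r, j). r @ [j]) ` (inv_seq n \<times> {1..Suc n})"
    then obtain r j where r: "r \<in> inv_seq n" and j: "j \<in> {1..Suc n}" and s: "s = r @ [j]" by auto
    show "s \<in> inv_seq (Suc n)"
      unfolding inv_seq_def
    proof (intro CollectI conjI allI impI)
      show "length s = Suc n" using r s by (simp add: inv_seq_def)
    next
      fix k assume "k < Suc n"
      then have "k < n \<or> k = n" by auto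
      then show "1 \<le> s ! k" "s ! k \<le> k + 1"
        using r j s by (auto simp: inv_seq_def nth_append)
    qed
  qed
qed

lemma inj_snoc: "inj_on (\<lambda>(r, j). r @ [j]) X" by (auto simp: inj_on_def)

lemma finite_inv_seq: "finite (inv_seq n)"
  by (induction n) (auto simp: inv_seq_0 inv_seq_Suc)

lemma card_inv_seq: "card (inv_seq n) = fact n"
proof (induction n)
  case 0 then show ?case by (simp add: inv_seq_0)
next
  case (Suc n)
  have "card (inv_seq (Suc n)) = card (inv_seq n \<times> {1..Suc n})"
    unfolding inv_seq_Suc by (rule card_image[OF inj_snoc])
  also have "\<dots> = fact n * Suc n" by (simp add: card_cartesian_product Suc)
  finally show ?case by simp
qed

lemma I_set_Suc: "j \<in> {1..Suc n} \<Longrightarrow> I_set (Suc n) j = (\<lambda>r. r @ [j]) ` inv_seq n"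
  unfolding I_set_def inv_seq_Suc by auto

definition AA :: "(nat \<Rightarrow> nat \<Rightarrow> bool) \<Rightarrow> nat \<Rightarrow> nat" where
  "AA R n = (\<Sum>r\<in>inv_seq n. stat R r)"

definition cnt :: "(nat \<Rightarrow> nat \<Rightarrow> bool) \<Rightarrow> nat \<Rightarrow> nat \<Rightarrow> nat" where
  "cnt R n j = card {r \<in> inv_seq n. r \<noteq> [] \<and> R (last r) j}"

lemma sum_snoc: "(\<Sum>r\<in>inv_seq n. stat R (r @ [j])) = AA R n + cnt R n j"
proof -
  have "(\<Sum>r\<in>inv_seq n. stat R (r @ [j])) = (\<Sum>r\<in>inv_seq n. stat R r) + (\<Sum>r\<in>inv_seq n. (if r \<noteq> [] \<and> R (last r) j then 1 else 0))"
    by (simp add: stat_snoc sum.distrib)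
  also have "(\<Sum>r\<in>inv_seq n. (if r \<noteq> [] \<and> R (last r) j then 1 else 0)) = cnt R n j"
    unfolding cnt_def using finite_inv_seq[of n]
    by (simp add: sum.If_cases Int_def conj_commute)
  finally show ?thesis by (simp add: AA_def)
qed

lemma T_Suc:
  assumes "j \<in> {1..Suc n}"
  shows "(\<Sum>r\<in>I_set (Suc n) j. stat R r) = AA R n + cnt R n j"
proof -
  have "inj_on (\<lambda>r. r @ [j]) (inv_seq n)" by (auto simp: inj_on_def)
  then have "(\<Sum>r\<in>I_set (Suc n) j. stat R r) = (\<Sum>r\<in>inv_seq n. stat R (r @ [j]))"
    unfolding I_set_Suc[OF assms] by (simp add: sum.reindex)
  then show ?thesis by (simp add: sum_snoc)
qed

lemma AA_Suc: "AA R (Suc n) = Suc n * AA R n + (\<Sum>j\<in>{1..Suc n}. cnt R n j)"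
proof -
  have "AA R (Suc n) = (\<Sum>p\<in>inv_seq n \<times> {1..Suc n}. stat R (fst p @ [snd p]))"
    unfolding AA_def inv_seq_Suc
    by (subst sum.reindex[OF inj_snoc]) (simp add: case_prod_beta)
  also have "\<dots> = (\<Sum>r\<in>inv_seq n. \<Sum>j\<in>{1..Suc n}. stat R (r @ [j]))"
    by (simp only: sum.cartesian_product) (simp add: case_prod_beta)
  also have "\<dots> = (\<Sum>j\<in>{1..Suc n}. \<Sum>r\<in>inv_seq n. stat R (r @ [j]))"
    by (rule sum.swap)
  also have "\<dots> = (\<Sum>j\<in>{1..Suc n}. AA R n + cnt R n j)"
    by (simp add: sum_snoc)
  also have "\<dots> = Suc n * AA R n + (\<Sum>j\<in>{1..Suc n}. cnt R n j)"
    by (simp add: sum.distrib)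
  finally show ?thesis .
qed

lemma AA_0: "AA R 0 = 0" by (simp add: AA_def inv_seq_0 stat_Nil)

lemma cnt_0: "cnt R 0 j = 0" by (simp add: cnt_def inv_seq_0)

lemma cnt_Suc: "cnt R (Suc m) j = fact m * card {k \<in> {1..Suc m}. R k j}"
proof -
  have "{r \<in> inv_seq (Suc m). r \<noteq> [] \<and> R (last r) j} = (\<lambda>(r, k). r @ [k]) ` (inv_seq m \<times> {k \<in> {1..Suc m}. R k j})"
    unfolding inv_seq_Suc by auto
  then have "cnt R (Suc m) j = card (inv_seq m \<times> {k \<in> {1..Suc m}. R k j})"
    unfolding cnt_def by (simp add: card_image[OF inj_snoc])
  then show ?thesis by (simp add: card_cartesian_product card_inv_seq)
qed



lemma geo: "(1 - y) * (\<Sum>j\<in>{1..n}. (y::real) ^ j) = y - y ^ (n+1)"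
proof (induction n)
  case (Suc n)
  have "(1 - y) * (\<Sum>j\<in>{1..Suc n}. y ^ j) = (1 - y) * (\<Sum>j\<in>{1..n}. y ^ j) + (1 - y) * y ^ Suc n"
    by (simp add: distrib_left)
  also have "\<dots> = y - y ^ (Suc n + 1)" unfolding Suc by (simp add: algebra_simps)
  finally show ?case .
qed simp

lemma geo': "(y::real) \<noteq> 1 \<Longrightarrow> (\<Sum>j\<in>{1..n}. y ^ j) = (y - y ^ (n+1)) / (1 - y)"
  using geo[of y n] by (simp add: field_simps)

lemma H_Suc: "H (Suc n) = H n + 1 / real (Suc n)" by (simp add: H_def)

lemma card_eq: "card {k \<in> {1..Suc m}. k = j} = (if j \<in> {1..Suc m} then 1 else 0)"
proof -
  have "{k \<in> {1..Suc m}. k = j} = (if j \<in> {1..Suc m} then {j} else {})" by auto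
  then show ?thesis by simp
qed

lemma card_gt: "card {k \<in> {1..Suc m}. j < k} = Suc m - j"
proof -
  have "{k \<in> {1..Suc m}. j < k} = {Suc j..Suc m}" by auto
  then show ?thesis by simp
qed

lemma card_lt: "card {k \<in> {1..Suc m}. k < j} = min (j - 1) (Suc m)"
proof -
  have "{k \<in> {1..Suc m}. k < j} = {1..min (j - 1) (Suc m)}" by auto
  then show ?thesis by simp
qed

lemma AA_L: "real (AA (=) (Suc m)) = fact (Suc m) * (H (Suc m) - 1)"
proof (induction m)
  case 0
  then show ?case by (simp add: AA_Suc AA_0 cnt_0 H_def)
next
  case (Suc m)
  have "(\<Sum>j\<in>{1..Suc (Suc m)}. cnt (=) (Suc m) j) = (\<Sum>j\<in>{1..Suc (Suc m)}. fact m * (if j \<in> {1..Suc m} then 1 else 0))"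
    by (intro sum.cong refl) (simp only: cnt_Suc card_eq)
  also have "\<dots> = fact m * Suc m"
    by (simp add: sum_distrib_left[symmetric] sum.If_cases)
  finally have s: "(\<Sum>j\<in>{1..Suc (Suc m)}. cnt (=) (Suc m) j) = fact m * Suc m" .
  have "real (AA (=) (Suc (Suc m))) = real (Suc (Suc m)) * real (AA (=) (Suc m)) + real (fact m * Suc m)"
    by (subst AA_Suc) (simp only: s of_nat_add of_nat_mult)
  also have "\<dots> = fact (Suc (Suc m)) * (H (Suc (Suc m)) - 1)"
    unfolding Suc.IH H_Suc[of "Suc m"] by (simp add: field_simps)
  finally show ?case .
qed

definition e1 :: "nat \<Rightarrow> real \<Rightarrow> real" where "e1 n z = z ^ (n+1)"
definition e2 :: "nat \<Rightarrow> real \<Rightarrow> real" where "e2 n z = z ^ (n+1) / real (n+1)"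
definition e3 :: "nat \<Rightarrow> real \<Rightarrow> real" where "e3 n z = H n * z ^ (n+1) / real (n+1)"
definition e4 :: "nat \<Rightarrow> real \<Rightarrow> real" where "e4 n z = z ^ (n+1) / real n"

definition cL :: "real \<Rightarrow> real \<Rightarrow> nat \<Rightarrow> real" where
  "cL x y n = y/(1-y)*((e3 n x - e2 n x) - (e3 n (x*y) - e2 n (x*y)))
     + 1/(1-y)*(y*(e4 n x - e2 n x) - (e4 n (x*y) - e2 n (x*y)))"

lemma L_Suc: "j \<in> {1..Suc n} \<Longrightarrow> L_tot (Suc n) j = AA (=) n + cnt (=) n j"
  unfolding L_tot_def levels_stat by (rule T_Suc)

lemma alg_L0:
  fixes a b F y h Y X w :: real
  assumes "a \<noteq> 0" "b \<noteq> 0" "F \<noteq> 0"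
  shows "(a*F*(h-1)*((y - y*Y)*w) + F*((y-Y)*w)) * X / (b*(a*F))
    - (y*w*((h*X/b - X/b) - (h*(X*Y)/b - X*Y/b)) + w*(y*(X/a - X/b) - (X*Y/a - X*Y/b)))
    = X * w * (y - Y) * (1 - (b - a)) / (a*b)"
  using assms by (simp add: field_simps)

lemma alg_L:
  fixes a b F y h Y X :: real
  assumes "a > 0" "b = a + 1" "F > 0" "y \<noteq> 1"
  shows "(a*F*(h-1)*((y - y*Y)/(1-y)) + F*((y-Y)/(1-y))) * X / (b*(a*F))
    = y/(1-y)*((h*X/b - X/b) - (h*(X*Y)/b - X*Y/b)) + 1/(1-y)*(y*(X/a - X/b) - (X*Y/a - X*Y/b))"
proof -
  define w where "w = 1 / (1 - y)"
  have d: "\<And>t. t / (1 - y) = t * w" by (simp add: w_def)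
  have "b \<noteq> 0" using assms by auto
  from alg_L0[OF _ this, of a F h y Y w X] assms
  show ?thesis unfolding d by (simp add: mult.commute)
qed

lemma term_L:
  assumes y: "y \<noteq> 1"
  shows "(\<Sum>j=1..Suc n. real (L_tot (Suc n) j) * y ^ j) * x ^ (Suc n) / fact (Suc n)
         = cL x y n - (if n = 0 then cL x y 0 else 0)"
proof (cases n)
  case 0
  then show ?thesis by (simp add: L_Suc AA_0 cnt_0)
next
  case (Suc m)
  have "(\<Sum>j=1..Suc n. real (L_tot (Suc n) j) * y ^ j)
     = (\<Sum>j=1..Suc (Suc m). (fact (Suc m) * (H (Suc m) - 1)) * y ^ j + fact m * (if j \<le> Suc m then y ^ j else 0))"
  proof (rule sum.cong)
    fix j assume j: "j \<in> {1..Suc (Suc m)}"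
    have "real (L_tot (Suc n) j) = real (AA (=) (Suc m)) + real (cnt (=) (Suc m) j)"
      using L_Suc[OF j] Suc by simp
    also have "\<dots> = fact (Suc m) * (H (Suc m) - 1) + fact m * (if j \<le> Suc m then 1 else 0)"
      using j Suc by (simp only: AA_L cnt_Suc card_eq) auto
    finally have eq: "real (L_tot (Suc n) j) = fact (Suc m) * (H (Suc m) - 1) + fact m * (if j \<le> Suc m then 1 else 0)" .
    show "real (L_tot (Suc n) j) * y ^ j = (fact (Suc m) * (H (Suc m) - 1)) * y ^ j + fact m * (if j \<le> Suc m then y ^ j else 0)"
      unfolding eq by (cases "j \<le> Suc m") (simp_all add: algebra_simps)
  qed (simp add: Suc)
  also have "\<dots> = (fact (Suc m) * (H (Suc m) - 1)) * (\<Sum>j=1..Suc (Suc m). y ^ j) + fact m * (\<Sum>j=1..Suc m. y ^ j)"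
    by (simp add: sum.distrib sum_distrib_left[symmetric] sum.If_cases)
  finally have S: "(\<Sum>j=1..Suc n. real (L_tot (Suc n) j) * y ^ j)
     = (fact (Suc m) * (H (Suc m) - 1)) * ((y - y ^ (Suc (Suc m) + 1)) / (1 - y)) + fact m * ((y - y ^ (Suc m + 1)) / (1 - y))"
    by (simp only: geo'[OF y])
  define X where "X = x ^ (Suc m + 1)"
  define Y where "Y = y ^ (Suc m + 1)"
  have p1: "(x*y) ^ (Suc m + 1) = X * Y" by (simp add: X_def Y_def power_mult_distrib)
  have p2: "y ^ (Suc (Suc m) + 1) = y * Y" by (simp add: Y_def)
  have p3: "x ^ Suc n = X" by (simp add: X_def Suc)
  have f1: "fact (Suc m) = real (Suc m) * fact m" by simp
  have f2: "fact (Suc n) = real (Suc m + 1) * (real (Suc m) * fact m)" by (simp add: Suc)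
  have "cL x y n = y/(1-y)*((H (Suc m) * X / real (Suc m + 1) - X / real (Suc m + 1)) - (H (Suc m) * (X*Y) / real (Suc m + 1) - X*Y / real (Suc m + 1)))
     + 1/(1-y)*(y*(X / real (Suc m) - X / real (Suc m + 1)) - (X*Y / real (Suc m) - X*Y / real (Suc m + 1)))"
    unfolding cL_def e2_def e3_def e4_def Suc p1 X_def by simp
  moreover have "(\<Sum>j=1..Suc n. real (L_tot (Suc n) j) * y ^ j) * x ^ (Suc n) / fact (Suc n)
     = (real (Suc m) * fact m * (H (Suc m) - 1) * ((y - y * Y) / (1 - y)) + fact m * ((y - Y) / (1 - y))) * X / (real (Suc m + 1) * (real (Suc m) * fact m))"
    unfolding S p2 p3 f2 f1 Y_def by simp
  ultimately show ?thesis using Suc alg_L[of "real (Suc m)" "real (Suc m + 1)" "fact m" y "H (Suc m)" Y X] y by simp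
qed

lemma sumD: "(\<Sum>j=1..Suc (Suc m). real (Suc m - j)) = real m * (real m + 1) / 2"
proof (induction m)
  case 0 then show ?case by simp
next
  case (Suc m)
  have "(\<Sum>j=1..Suc (Suc (Suc m)). real (Suc (Suc m) - j)) = real (Suc m) + (\<Sum>j=Suc 1..Suc (Suc (Suc m)). real (Suc (Suc m) - j))"
    by (subst sum.atLeast_Suc_atMost) auto
  also have "(\<Sum>j=Suc 1..Suc (Suc (Suc m)). real (Suc (Suc m) - j)) = (\<Sum>j=1..Suc (Suc m). real (Suc m - j))"
    by (subst sum.shift_bounds_cl_Suc_ivl) simp
  finally show ?case unfolding Suc by (simp add: field_simps)
qed

lemma WD: "(1 - y)^2 * (\<Sum>j=1..Suc (Suc m). real (Suc m - j) * (y::real) ^ j) = real m * y - real (Suc m) * y^2 + y ^ Suc (Suc m)"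
proof (induction m)
  case 0 then show ?case by (simp add: power2_eq_square)
next
  case (Suc m)
  have "(\<Sum>j=1..Suc (Suc (Suc m)). real (Suc (Suc m) - j) * y ^ j) = real (Suc m) * y + (\<Sum>j=Suc 1..Suc (Suc (Suc m)). real (Suc (Suc m) - j) * y ^ j)"
    by (subst sum.atLeast_Suc_atMost) auto
  also have "(\<Sum>j=Suc 1..Suc (Suc (Suc m)). real (Suc (Suc m) - j) * y ^ j) = y * (\<Sum>j=1..Suc (Suc m). real (Suc m - j) * y ^ j)"
    by (subst sum.shift_bounds_cl_Suc_ivl) (simp add: sum_distrib_left algebra_simps)
  finally have "(1 - y)^2 * (\<Sum>j=1..Suc (Suc (Suc m)). real (Suc (Suc m) - j) * y ^ j)
     = (1 - y)^2 * (real (Suc m) * y) + y * ((1 - y)^2 * (\<Sum>j=1..Suc (Suc m). real (Suc m - j) * y ^ j))"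
    by (simp add: algebra_simps)
  also have "\<dots> = real (Suc m) * y - real (Suc (Suc m)) * y^2 + y ^ Suc (Suc (Suc m))"
    unfolding Suc by (simp add: algebra_simps power2_eq_square)
  finally show ?case .
qed

lemma sumU: "(\<Sum>j=1..n. real (j - 1)) = real n * (real n - 1) / 2"
proof (induction n)
  case (Suc n) then show ?case by (cases n) (simp_all add: field_simps)
qed simp

lemma WU: "(1 - y)^2 * (\<Sum>j=1..n. real (j - 1) * (y::real) ^ j) = y * (y - real n * y ^ n + (real n - 1) * y ^ (n+1))"
proof (induction n)
  case 0 then show ?case by (simp add: algebra_simps)
next
  case (Suc n)
  have "(1 - y)^2 * (\<Sum>j=1..Suc n. real (j - 1) * y ^ j) = (1 - y)^2 * (\<Sum>j=1..n. real (j - 1) * y ^ j) + (1 - y)^2 * (real n * y ^ Suc n)"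
    by (simp add: distrib_left)
  also have "\<dots> = y * (y - real (Suc n) * y ^ Suc n + (real (Suc n) - 1) * y ^ (Suc n + 1))"
    unfolding Suc by (simp add: algebra_simps power2_eq_square)
  finally show ?case .
qed

lemma AA_D: "real (AA (\<lambda>a b. b < a) (Suc m)) = fact (Suc m) * (real m / 2 - H (Suc m) + 1)"
proof (induction m)
  case 0
  then show ?case by (simp add: AA_Suc AA_0 cnt_0 H_def)
next
  case (Suc m)
  have "(\<Sum>j\<in>{1..Suc (Suc m)}. cnt (\<lambda>a b. b < a) (Suc m) j) = (\<Sum>j\<in>{1..Suc (Suc m)}. fact m * (Suc m - j))"
    by (intro sum.cong refl) (simp only: cnt_Suc card_gt)
  then have s: "real (\<Sum>j\<in>{1..Suc (Suc m)}. cnt (\<lambda>a b. b < a) (Suc m) j) = fact m * (real m * (real m + 1) / 2)"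
    by (simp only: of_nat_sum of_nat_mult sum_distrib_left[symmetric] sumD) simp
  have "real (AA (\<lambda>a b. b < a) (Suc (Suc m))) = real (Suc (Suc m)) * real (AA (\<lambda>a b. b < a) (Suc m)) + real (\<Sum>j\<in>{1..Suc (Suc m)}. cnt (\<lambda>a b. b < a) (Suc m) j)"
    by (subst AA_Suc) (simp only: of_nat_add of_nat_mult)
  also have "\<dots> = fact (Suc (Suc m)) * (real (Suc m) / 2 - H (Suc (Suc m)) + 1)"
    unfolding Suc.IH s H_Suc[of "Suc m"] by (simp add: field_simps)
  finally show ?case .
qed

lemma AA_U: "real (AA (<) (Suc m)) = fact (Suc m) * (real m / 2)"
proof (induction m)
  case 0
  then show ?case by (simp add: AA_Suc AA_0 cnt_0)
next
  case (Suc m)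
  have "(\<Sum>j\<in>{1..Suc (Suc m)}. cnt (<) (Suc m) j) = (\<Sum>j\<in>{1..Suc (Suc m)}. fact m * (j - 1))"
    by (intro sum.cong refl) (simp only: cnt_Suc card_lt, auto simp add: min_def)
  then have s: "real (\<Sum>j\<in>{1..Suc (Suc m)}. cnt (<) (Suc m) j) = fact m * (real (Suc (Suc m)) * (real (Suc (Suc m)) - 1) / 2)"
    by (simp only: of_nat_sum of_nat_mult sum_distrib_left[symmetric] sumU) simp
  have "real (AA (<) (Suc (Suc m))) = real (Suc (Suc m)) * real (AA (<) (Suc m)) + real (\<Sum>j\<in>{1..Suc (Suc m)}. cnt (<) (Suc m) j)"
    by (subst AA_Suc) (simp only: of_nat_add of_nat_mult)
  also have "\<dots> = fact (Suc (Suc m)) * (real (Suc m) / 2)"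
    unfolding Suc.IH s by (simp add: field_simps)
  finally show ?case .
qed

lemma alg_D0:
  fixes a F u h Y X :: real
  assumes nz: "a \<noteq> 0" "b \<noteq> 0" "F \<noteq> 0" "u \<noteq> 0" and ab: "b = a + 1"
  shows "(a*F*((a-1)/2 - h + 1)*(((1-u) - (1-u)*Y)/u) + F*(((a-1)*(1-u) - a*(1-u)^2 + Y)/u^2)) * X / (b*(a*F))
    = (1-u)/u*((X/2 - h*X/b) - ((X*Y)/2 - h*(X*Y)/b)) + 1/u^2*((1-u)*(2*(X/b) - X/a) - (1-u)^2*(X/b) + (X*Y/a - X*Y/b))"
  using nz by (simp add: field_simps) (simp add: ab algebra_simps)

lemma alg_U0:
  fixes a F u h Y X :: real
  assumes nz: "a \<noteq> 0" "b \<noteq> 0" "F \<noteq> 0" "u \<noteq> 0" and ab: "b = a + 1"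
  shows "(a*F*((a-1)/2)*(((1-u) - (1-u)*Y)/u) + F*(((1-u)*((1-u) - b*Y + a*(1-u)*Y))/u^2)) * X / (b*(a*F))
    = (1-u)/u*((X/2 - X/b) - ((X*Y)/2 - (X*Y)/b)) + (1-u)/u^2*((1-u)*(X/a - X/b) - X*Y/a + (1-u)*(X*Y/b))"
  using nz by (simp add: field_simps) (simp add: ab algebra_simps)

lemma alg_D:
  fixes a b c F y h Y X :: real
  assumes "a = c + 1" "b = c + 2" "c \<ge> 0" "F > 0" "y \<noteq> 1"
  shows "(a*F*(c/2 - h + 1)*((y - y*Y)/(1-y)) + F*((c*y - a*y^2 + Y)/(1-y)^2)) * X / (b*(a*F))
    = y/(1-y)*((X/2 - h*X/b) - ((X*Y)/2 - h*(X*Y)/b)) + 1/(1-y)^2*(y*(2*(X/b) - X/a) - y^2*(X/b) + (X*Y/a - X*Y/b))"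
  using alg_D0[of a b F "1-y" h Y X] assms by simp

lemma alg_U:
  fixes a b c F y h Y X :: real
  assumes "a = c + 1" "b = c + 2" "c \<ge> 0" "F > 0" "y \<noteq> 1"
  shows "(a*F*(c/2)*((y - y*Y)/(1-y)) + F*((y*(y - b*Y + a*y*Y))/(1-y)^2)) * X / (b*(a*F))
    = y/(1-y)*((X/2 - X/b) - ((X*Y)/2 - (X*Y)/b)) + y/(1-y)^2*(y*(X/a - X/b) - X*Y/a + y*(X*Y/b))"
  using alg_U0[of a b F "1-y" Y X] assms by simp

definition cD :: "real \<Rightarrow> real \<Rightarrow> nat \<Rightarrow> real" where
  "cD x y n = y/(1-y)*((e1 n x/2 - e3 n x) - (e1 n (x*y)/2 - e3 n (x*y)))
     + 1/(1-y)^2*(y*(2*e2 n x - e4 n x) - y^2*e2 n x + (e4 n (x*y) - e2 n (x*y)))"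

definition cU :: "real \<Rightarrow> real \<Rightarrow> nat \<Rightarrow> real" where
  "cU x y n = y/(1-y)*((e1 n x/2 - e2 n x) - (e1 n (x*y)/2 - e2 n (x*y)))
     + y/(1-y)^2*(y*(e4 n x - e2 n x) - e4 n (x*y) + y*e2 n (x*y))"

lemma D_Suc: "j \<in> {1..Suc n} \<Longrightarrow> D_tot (Suc n) j = AA (\<lambda>a b. b < a) n + cnt (\<lambda>a b. b < a) n j"
  unfolding D_tot_def descents_stat by (rule T_Suc)

lemma U_Suc: "j \<in> {1..Suc n} \<Longrightarrow> U_tot (Suc n) j = AA (<) n + cnt (<) n j"
  unfolding U_tot_def ascents_stat by (rule T_Suc)

lemma term_D:
  assumes y: "y \<noteq> 1"
  shows "(\<Sum>j=1..Suc n. real (D_tot (Suc n) j) * y ^ j) * x ^ (Suc n) / fact (Suc n)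
         = cD x y n - (if n = 0 then cD x y 0 else 0)"
proof (cases n)
  case 0
  then show ?thesis by (simp add: D_Suc AA_0 cnt_0)
next
  case (Suc m)
  have "(\<Sum>j=1..Suc n. real (D_tot (Suc n) j) * y ^ j)
     = (\<Sum>j=1..Suc (Suc m). (fact (Suc m) * (real m / 2 - H (Suc m) + 1)) * y ^ j + fact m * (real (Suc m - j) * y ^ j))"
  proof (rule sum.cong)
    fix j assume j: "j \<in> {1..Suc (Suc m)}"
    have "real (D_tot (Suc n) j) = real (AA (\<lambda>a b. b < a) (Suc m)) + real (cnt (\<lambda>a b. b < a) (Suc m) j)"
      using D_Suc[OF j] Suc by simp
    also have "\<dots> = fact (Suc m) * (real m / 2 - H (Suc m) + 1) + fact m * real (Suc m - j)"
      by (simp only: AA_D cnt_Suc card_gt) simp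
    finally have eq: "real (D_tot (Suc n) j) = fact (Suc m) * (real m / 2 - H (Suc m) + 1) + fact m * real (Suc m - j)" .
    show "real (D_tot (Suc n) j) * y ^ j = (fact (Suc m) * (real m / 2 - H (Suc m) + 1)) * y ^ j + fact m * (real (Suc m - j) * y ^ j)"
      unfolding eq by (simp add: algebra_simps)
  qed (simp add: Suc)
  also have "\<dots> = (fact (Suc m) * (real m / 2 - H (Suc m) + 1)) * (\<Sum>j=1..Suc (Suc m). y ^ j) + fact m * (\<Sum>j=1..Suc (Suc m). real (Suc m - j) * y ^ j)"
    by (simp only: sum.distrib sum_distrib_left)
  also have "(\<Sum>j=1..Suc (Suc m). real (Suc m - j) * y ^ j) = (real m * y - real (Suc m) * y^2 + y ^ Suc (Suc m)) / (1 - y)^2"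
    using WD[of y m] y by (simp add: field_simps)
  finally have S: "(\<Sum>j=1..Suc n. real (D_tot (Suc n) j) * y ^ j)
     = (fact (Suc m) * (real m / 2 - H (Suc m) + 1)) * ((y - y ^ (Suc (Suc m) + 1)) / (1 - y)) + fact m * ((real m * y - real (Suc m) * y^2 + y ^ Suc (Suc m)) / (1 - y)^2)"
    by (simp only: geo'[OF y])
  define X where "X = x ^ (Suc m + 1)"
  define Y where "Y = y ^ (Suc m + 1)"
  have p1: "(x*y) ^ (Suc m + 1) = X * Y" by (simp add: X_def Y_def power_mult_distrib)
  have p2: "y ^ (Suc (Suc m) + 1) = y * Y" by (simp add: Y_def)
  have p2': "y ^ Suc (Suc m) = Y" by (simp add: Y_def)
  have p3: "x ^ Suc n = X" by (simp add: X_def Suc)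
  have f1: "fact (Suc m) = real (Suc m) * fact m" by simp
  have f2: "fact (Suc n) = real (Suc m + 1) * (real (Suc m) * fact m)" by (simp add: Suc)
  have "cD x y n = y/(1-y)*((X/2 - H (Suc m)*X/real (Suc m + 1)) - ((X*Y)/2 - H (Suc m)*(X*Y)/real (Suc m + 1)))
     + 1/(1-y)^2*(y*(2*(X/real (Suc m + 1)) - X/real (Suc m)) - y^2*(X/real (Suc m + 1)) + (X*Y/real (Suc m) - X*Y/real (Suc m + 1)))"
    unfolding cD_def e1_def e2_def e3_def e4_def Suc p1 X_def by simp
  moreover have "(\<Sum>j=1..Suc n. real (D_tot (Suc n) j) * y ^ j) * x ^ (Suc n) / fact (Suc n)
     = (real (Suc m) * fact m * (real m / 2 - H (Suc m) + 1) * ((y - y * Y) / (1 - y)) + fact m * ((real m * y - real (Suc m) * y^2 + Y) / (1 - y)^2)) * X / (real (Suc m + 1) * (real (Suc m) * fact m))"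
    unfolding S p2 p2' p3 f2 f1 by simp
  ultimately show ?thesis using Suc alg_D[of "real (Suc m)" "real m" "real (Suc m + 1)" "fact m" y "H (Suc m)" Y X] y by simp
qed

lemma term_U:
  assumes y: "y \<noteq> 1"
  shows "(\<Sum>j=1..Suc n. real (U_tot (Suc n) j) * y ^ j) * x ^ (Suc n) / fact (Suc n)
         = cU x y n - (if n = 0 then cU x y 0 else 0)"
proof (cases n)
  case 0
  then show ?thesis by (simp add: U_Suc AA_0 cnt_0)
next
  case (Suc m)
  have "(\<Sum>j=1..Suc n. real (U_tot (Suc n) j) * y ^ j)
     = (\<Sum>j=1..Suc (Suc m). (fact (Suc m) * (real m / 2)) * y ^ j + fact m * (real (j - 1) * y ^ j))"
  proof (rule sum.cong)
    fix j assume j: "j \<in> {1..Suc (Suc m)}"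
    have "real (U_tot (Suc n) j) = real (AA (<) (Suc m)) + real (cnt (<) (Suc m) j)"
      using U_Suc[OF j] Suc by simp
    also have "\<dots> = fact (Suc m) * (real m / 2) + fact m * real (j - 1)"
      using j by (simp only: AA_U cnt_Suc card_lt) (auto simp: min_def)
    finally have eq: "real (U_tot (Suc n) j) = fact (Suc m) * (real m / 2) + fact m * real (j - 1)" .
    show "real (U_tot (Suc n) j) * y ^ j = (fact (Suc m) * (real m / 2)) * y ^ j + fact m * (real (j - 1) * y ^ j)"
      unfolding eq by (simp add: algebra_simps)
  qed (simp add: Suc)
  also have "\<dots> = (fact (Suc m) * (real m / 2)) * (\<Sum>j=1..Suc (Suc m). y ^ j) + fact m * (\<Sum>j=1..Suc (Suc m). real (j - 1) * y ^ j)"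
    by (simp only: sum.distrib sum_distrib_left)
  also have "(\<Sum>j=1..Suc (Suc m). real (j - 1) * y ^ j) = (y * (y - real (Suc (Suc m)) * y ^ Suc (Suc m) + real (Suc m) * y * y ^ Suc (Suc m))) / (1 - y)^2"
    using WU[of y "Suc (Suc m)"] y by (simp add: field_simps)
  finally have S: "(\<Sum>j=1..Suc n. real (U_tot (Suc n) j) * y ^ j)
     = (fact (Suc m) * (real m / 2)) * ((y - y ^ (Suc (Suc m) + 1)) / (1 - y)) + fact m * ((y * (y - real (Suc (Suc m)) * y ^ Suc (Suc m) + real (Suc m) * y * y ^ Suc (Suc m))) / (1 - y)^2)"
    by (simp only: geo'[OF y])
  define X where "X = x ^ (Suc m + 1)"
  define Y where "Y = y ^ (Suc m + 1)"
  have p1: "(x*y) ^ (Suc m + 1) = X * Y" by (simp add: X_def Y_def power_mult_distrib)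
  have p2: "y ^ (Suc (Suc m) + 1) = y * Y" by (simp add: Y_def)
  have p2': "y ^ Suc (Suc m) = Y" by (simp add: Y_def)
  have p3: "x ^ Suc n = X" by (simp add: X_def Suc)
  have f1: "fact (Suc m) = real (Suc m) * fact m" by simp
  have f2: "fact (Suc n) = real (Suc m + 1) * (real (Suc m) * fact m)" by (simp add: Suc)
  have "cU x y n = y/(1-y)*((X/2 - X/real (Suc m + 1)) - ((X*Y)/2 - (X*Y)/real (Suc m + 1)))
     + y/(1-y)^2*(y*(X/real (Suc m) - X/real (Suc m + 1)) - X*Y/real (Suc m) + y*(X*Y/real (Suc m + 1)))"
    unfolding cU_def e1_def e2_def e4_def Suc p1 X_def by simp
  moreover have "(\<Sum>j=1..Suc n. real (U_tot (Suc n) j) * y ^ j) * x ^ (Suc n) / fact (Suc n)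
     = (real (Suc m) * fact m * (real m / 2) * ((y - y * Y) / (1 - y)) + fact m * ((y * (y - real (Suc m + 1) * Y + real (Suc m) * y * Y)) / (1 - y)^2)) * X / (real (Suc m + 1) * (real (Suc m) * fact m))"
    unfolding S p2 p2' p3 f2 f1 by simp
  ultimately show ?thesis using Suc alg_U[of "real (Suc m)" "real m" "real (Suc m + 1)" "fact m" y Y X] y by simp
qed



lemma E1: "\<bar>z\<bar> < 1 \<Longrightarrow> (\<lambda>n. e1 n z) sums (z / (1 - z))" unfolding e1_def by (rule e1_sums)
lemma E2: "\<bar>z\<bar> < 1 \<Longrightarrow> (\<lambda>n. e2 n z) sums (- ln (1 - z))" unfolding e2_def by (rule e2_sums)
lemma E3: "\<bar>z\<bar> < 1 \<Longrightarrow> (\<lambda>n. e3 n z) sums ((ln (1 - z))^2 / 2)" unfolding e3_def by (rule e3_sums)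
lemma E4: "\<bar>z\<bar> < 1 \<Longrightarrow> (\<lambda>n. e4 n z) sums (- z * ln (1 - z))" unfolding e4_def by (rule e4_sums)

lemma e_zero: "e1 0 z = z" "e2 0 z = z" "e3 0 z = 0" "e4 0 z = 0"
  by (simp_all add: e1_def e2_def e3_def e4_def H_def)

lemma constD:
  fixes x y :: real
  assumes "1 - y \<noteq> 0" "1 - x \<noteq> 0" "1 - x*y \<noteq> 0"
  shows "y/(1-y)*(x/(1-x)/2 - x*y/(1-x*y)/2) - (y/(1-y)*(x/2 - x*y/2) + 1/(1-y)^2*(y*(2*x) - y^2*x - x*y))
       = x*y/(2*(1-y))*((3*x-2)/(1-x) - x*y^2/(1-x*y))"
proof -
  define u p q where "u = 1 - y" and "p = 1 - x" and "q = 1 - x * y"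
  have nz: "u \<noteq> 0" "p \<noteq> 0" "q \<noteq> 0" using assms by (simp_all add: u_def p_def q_def)
  show ?thesis unfolding u_def[symmetric] p_def[symmetric] q_def[symmetric]
    using nz by (simp add: field_simps) (simp add: u_def p_def q_def algebra_simps power2_eq_square)
qed

lemma constU:
  fixes x y :: real
  assumes "1 - y \<noteq> 0" "1 - x \<noteq> 0" "1 - x*y \<noteq> 0"
  shows "y/(1-y)*(x/(1-x)/2 - x*y/(1-x*y)/2) - (y/(1-y)*((x/2 - x) - (x*y/2 - x*y)) + y/(1-y)^2*(y*(0-x) - 0 + y*(x*y)))
       = x*y/(2*(1-y))*((2-x)/(1-x) - x*y^2/(1-x*y))"
proof -
  define u p q where "u = 1 - y" and "p = 1 - x" and "q = 1 - x * y"
  have nz: "u \<noteq> 0" "p \<noteq> 0" "q \<noteq> 0" using assms by (simp_all add: u_def p_def q_def)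
  show ?thesis unfolding u_def[symmetric] p_def[symmetric] q_def[symmetric]
    using nz by (simp add: field_simps) (simp add: u_def p_def q_def algebra_simps power2_eq_square)
qed

lemma coefU:
  fixes x y :: real
  assumes "1 - y \<noteq> 0"
  shows "y/(1-y) + y/(1-y)^2*(y*(1-x)) = y*(1-x*y)/(1-y)^2"
        "- (y/(1-y)) + y/(1-y)^2*(x*y - y) = - (y*(1-x*y)/(1-y)^2)"
proof -
  define u where "u = 1 - y"
  have nz: "u \<noteq> 0" using assms by (simp_all add: u_def)
  show "y/(1-y) + y/(1-y)^2*(y*(1-x)) = y*(1-x*y)/(1-y)^2"
    unfolding u_def[symmetric]
    using nz by (simp add: field_simps) (simp add: u_def algebra_simps power2_eq_square numeral_eq_Suc power_Suc)
  show "- (y/(1-y)) + y/(1-y)^2*(x*y - y) = - (y*(1-x*y)/(1-y)^2)"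
    unfolding u_def[symmetric]
    using nz by (simp add: field_simps) (simp add: u_def algebra_simps power2_eq_square numeral_eq_Suc power_Suc)
qed

lemma ringU:
  fixes a c r1 r2 Z K e A B x y :: real
  assumes "a*(r1 - r2) - Z = K" "a + c*(y*(1-x)) = e" "- a + c*(x*y - y) = - e"
  shows "a*((r1 - - A) - (r2 - - B)) + c*(y*(- x*A - - A) - - (x*y)*B + y * - B) - Z = K + e*(A - B)"
proof -
  have "a*((r1 - - A) - (r2 - - B)) + c*(y*(- x*A - - A) - - (x*y)*B + y * - B) - Z
      = (a*(r1 - r2) - Z) + A*(a + c*(y*(1-x))) + B*(- a + c*(x*y - y))"
    by (simp add: algebra_simps)
  then show ?thesis unfolding assms by (simp add: algebra_simps)
qed

lemma ringD:
  fixes a c r1 r2 Z K A B x y :: real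
  assumes "a*(r1 - r2) - Z = K"
  shows "a*((r1 - A^2/2) - (r2 - B^2/2)) + c*(y*(2 * - A - - x * A) - y^2 * - A + (- (x*y) * B - - B)) - Z
     = K + c*((1 - x*y)*B - y*(2 - x - y)*A) + a*(B^2 - A^2)/2"
proof -
  have "a*((r1 - A^2/2) - (r2 - B^2/2)) + c*(y*(2 * - A - - x * A) - y^2 * - A + (- (x*y) * B - - B)) - Z
     = (a*(r1 - r2) - Z) + c*((1 - x*y)*B - y*(2 - x - y)*A) + a*(B^2 - A^2)/2"
    by (simp add: field_simps power2_eq_square)
  then show ?thesis unfolding assms .
qed


theorem theorem3p4:
  fixes x y :: real
  assumes "\<bar>x\<bar> < 1" and "\<bar>y\<bar> < 1"
  shows
   "((\<lambda>n. (\<Sum>j=1..Suc n. real (L_tot (Suc n) j) * y ^ j) * x ^ (Suc n) / fact (Suc n)) sums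
      (x * y + (2 * (x * y - y - 1) * ln (1 - x * y) - 2 * y * (x - 2) * ln (1 - x)
         - y * ((ln (1 - x * y))\<^sup>2 - (ln (1 - x))\<^sup>2)) / (2 * (1 - y)))) \<and>
   ((\<lambda>n. (\<Sum>j=1..Suc n. real (D_tot (Suc n) j) * y ^ j) * x ^ (Suc n) / fact (Suc n)) sums
      (x * y / (2 * (1 - y)) * ((3 * x - 2) / (1 - x) - x * y\<^sup>2 / (1 - x * y))
       + ((1 - x * y) * ln (1 - x * y) - y * (2 - x - y) * ln (1 - x)) / (1 - y)\<^sup>2
       + y * ((ln (1 - x * y))\<^sup>2 - (ln (1 - x))\<^sup>2) / (2 * (1 - y)))) \<and>
   ((\<lambda>n. (\<Sum>j=1..Suc n. real (U_tot (Suc n) j) * y ^ j) * x ^ (Suc n) / fact (Suc n)) sums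
      (x * y / (2 * (1 - y)) * ((2 - x) / (1 - x) - x * y\<^sup>2 / (1 - x * y))
       + y * (1 - x * y) / (1 - y)\<^sup>2 * ln ((1 - x) / (1 - x * y))))"

proof -
  have x: "\<bar>x\<bar> < 1" and y: "\<bar>y\<bar> < 1" using assms by auto
  have w: "\<bar>x * y\<bar> < 1" using x y by (simp add: abs_mult) (metis abs_ge_zero less_le_trans mult_le_one mult_less_cancel_right1 less_imp_le abs_not_less_zero not_less)
  have y1: "y \<noteq> 1" using y by auto
  have ny: "1 - y \<noteq> 0" using y1 by simp
  have nx: "1 - x \<noteq> 0" using x by auto
  have nw: "1 - x * y \<noteq> 0" using w by auto
  have px: "1 - x > 0" using x by auto
  have pw: "1 - x * y > 0" using w by auto
  let ?lx = "ln (1 - x)" and ?lw = "ln (1 - x * y)"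
  note E = E1[OF x] E2[OF x] E3[OF x] E4[OF x] E1[OF w] E2[OF w] E3[OF w] E4[OF w]
  have sL: "cL x y sums (y/(1-y)*(((?lx)^2/2 - - ?lx) - ((?lw)^2/2 - - ?lw)) + 1/(1-y)*(y*(- x * ?lx - - ?lx) - (- (x*y) * ?lw - - ?lw)))"
    unfolding cL_def[abs_def] by (intro sums_add sums_diff sums_mult E)
  have sD: "cD x y sums (y/(1-y)*((x/(1-x)/2 - (?lx)^2/2) - ((x*y)/(1-x*y)/2 - (?lw)^2/2))
     + 1/(1-y)^2*(y*(2 * - ?lx - - x * ?lx) - y^2 * - ?lx + (- (x*y) * ?lw - - ?lw)))"
    unfolding cD_def[abs_def] by (intro sums_add sums_diff sums_mult sums_divide E)
  have sU: "cU x y sums (y/(1-y)*((x/(1-x)/2 - - ?lx) - ((x*y)/(1-x*y)/2 - - ?lw))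
     + y/(1-y)^2*(y*(- x * ?lx - - ?lx) - - (x*y) * ?lw + y * - ?lw))"
    unfolding cU_def[abs_def] by (intro sums_add sums_diff sums_mult sums_divide E)
  have tL: "(\<lambda>n. (\<Sum>j=1..Suc n. real (L_tot (Suc n) j) * y ^ j) * x ^ (Suc n) / fact (Suc n))
     = (\<lambda>n. cL x y n - (if n = 0 then cL x y n else 0))"
    using term_L[OF y1] by (auto intro!: ext)
  have tD: "(\<lambda>n. (\<Sum>j=1..Suc n. real (D_tot (Suc n) j) * y ^ j) * x ^ (Suc n) / fact (Suc n))
     = (\<lambda>n. cD x y n - (if n = 0 then cD x y n else 0))"
    using term_D[OF y1] by (auto intro!: ext)
  have tU: "(\<lambda>n. (\<Sum>j=1..Suc n. real (U_tot (Suc n) j) * y ^ j) * x ^ (Suc n) / fact (Suc n))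
     = (\<lambda>n. cU x y n - (if n = 0 then cU x y n else 0))"
    using term_U[OF y1] by (auto intro!: ext)
  have c0: "cL x y 0 = y/(1-y)*((0 - x) - (0 - x*y)) + 1/(1-y)*(y*(0 - x) - (0 - x*y))"
           "cD x y 0 = y/(1-y)*(x/2 - x*y/2) + 1/(1-y)^2*(y*(2*x) - y^2*x - x*y)"
           "cU x y 0 = y/(1-y)*((x/2 - x) - (x*y/2 - x*y)) + y/(1-y)^2*(y*(0-x) - 0 + y*(x*y))"
    unfolding cL_def cD_def cU_def e_zero by simp_all
  have lq: "ln ((1 - x) / (1 - x * y)) = ?lx - ?lw" using px pw by (simp add: ln_div)
  define u p q where "u = 1 - y" and "p = 1 - x" and "q = 1 - x * y"
  have nz: "u \<noteq> 0" "p \<noteq> 0" "q \<noteq> 0" using ny nx nw by (simp_all add: u_def p_def q_def)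
  have fL: "(y/(1-y)*(((?lx)^2/2 - - ?lx) - ((?lw)^2/2 - - ?lw)) + 1/(1-y)*(y*(- x * ?lx - - ?lx) - (- (x*y) * ?lw - - ?lw))) - cL x y 0
     = x * y + (2 * (x * y - y - 1) * ?lw - 2 * y * (x - 2) * ?lx - y * ((?lw)\<^sup>2 - (?lx)\<^sup>2)) / (2 * (1 - y))"
    unfolding c0 u_def[symmetric] p_def[symmetric] q_def[symmetric]
    using nz by (simp add: field_simps) (simp add: u_def p_def q_def algebra_simps power2_eq_square numeral_eq_Suc power_Suc)
  have KD: "y/(1-y)*(x/(1-x)/2 - x*y/(1-x*y)/2) - cD x y 0
       = x*y/(2*(1-y))*((3*x-2)/(1-x) - x*y^2/(1-x*y))"
    unfolding c0 by (rule constD[OF ny nx nw])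
  have fD: "(y/(1-y)*((x/(1-x)/2 - (?lx)^2/2) - ((x*y)/(1-x*y)/2 - (?lw)^2/2))
     + 1/(1-y)^2*(y*(2 * - ?lx - - x * ?lx) - y^2 * - ?lx + (- (x*y) * ?lw - - ?lw))) - cD x y 0
     = x * y / (2 * (1 - y)) * ((3 * x - 2) / (1 - x) - x * y\<^sup>2 / (1 - x * y))
       + ((1 - x * y) * ?lw - y * (2 - x - y) * ?lx) / (1 - y)\<^sup>2
       + y * ((?lw)\<^sup>2 - (?lx)\<^sup>2) / (2 * (1 - y))"
  proof -
    have c1: "1/(1-y)^2 * ((1 - x*y)*?lw - y*(2 - x - y)*?lx) = ((1 - x * y) * ?lw - y * (2 - x - y) * ?lx) / (1 - y)\<^sup>2"
      by simp
    have c2: "y/(1-y) * ((?lw)^2 - (?lx)^2) / 2 = y * ((?lw)\<^sup>2 - (?lx)\<^sup>2) / (2 * (1 - y))"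
      by simp
    show ?thesis
      using ringD[OF KD, where c="1/(1-y)^2" and A="?lx" and B="?lw" and x=x and y=y] unfolding c1 c2 .
  qed
  have KU: "y/(1-y)*(x/(1-x)/2 - x*y/(1-x*y)/2) - cU x y 0
       = x*y/(2*(1-y))*((2-x)/(1-x) - x*y^2/(1-x*y))"
    unfolding c0 by (rule constU[OF ny nx nw])
  have fU: "(y/(1-y)*((x/(1-x)/2 - - ?lx) - ((x*y)/(1-x*y)/2 - - ?lw))
     + y/(1-y)^2*(y*(- x * ?lx - - ?lx) - - (x*y) * ?lw + y * - ?lw)) - cU x y 0
     = x * y / (2 * (1 - y)) * ((2 - x) / (1 - x) - x * y\<^sup>2 / (1 - x * y))
       + y * (1 - x * y) / (1 - y)\<^sup>2 * ln ((1 - x) / (1 - x * y))"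
    unfolding lq
    using ringU[OF KU coefU[OF ny], where A="?lx" and B="?lw"] .
  show ?thesis
    unfolding tL tD tU
    using sums_diff[OF sL sums_single[of 0 "cL x y"]] sums_diff[OF sD sums_single[of 0 "cD x y"]]
      sums_diff[OF sU sums_single[of 0 "cU x y"]]
    unfolding fL fD fU by simp
qed

end
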